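(* Consider $\min_{x\in\mathbb{R}^p,z\in\mathbb{R}^N}F(x,z):=f(x,z)+g(x)+h(z)$, where: (i) $f$ is differentiable with $M$-Lipschitz joint gradient, i.e. $\|(\nabla_xf(x_1,z_1)-\nabla_xf(x_2,z_2),\nabla_zf(x_1,z_1)-\nabla_zf(x_2,z_2))\|\le M\|(x_1-x_2,z_1-z_2)\|$ for all arguments and some $M>0$, and $g:\mathbb{R}^p\to\mathbb{R}\cup\{\infty\}$, $h:\mathbb{R}^N\to\mathbb{R}\cup\{\infty\}$ are proper, lower semicontinuous and directionally differentiable; (ii) $F$ is bounded below; (iii) $g$ and $h$ are prox-bounded, i.e. $g+\frac\eta2\|\cdot\|^2$ and $h+\frac\eta2\|\cdot\|^2$ are bounded below for some $\eta>0$. Let $\{(x_t,z_t):t\ge0\}$ be generated by the following algorithm (GPALM), run indefinitely: fix an integer $r\ge1$, $\rho_1,\rho_2>1$, $\sigma_1,\sigma_2\in(0,1)$, $0<\underline\eta\le\overline\eta$, a starting point $(x_0,z_0)$, and $\hat\eta_0^x=\hat\eta_0^z=1$. At iteration $t$, for $l=0,1,2,\dots$ set $\eta_t^x=\rho_1^l\hat\eta_t^x$, $\eta_t^z=\rho_2^l\hat\eta_t^z$ and compute $$x_{t+1}\in\operatorname{Prox}_{g/\eta_t^x}\Big(x_t-\tfrac1{\eta_t^x}\nabla_xf(x_t,z_t)\Big),\quad z_{t+1}\in\operatorname{Prox}_{h/\eta_t^z}\Big(z_t-\tfrac1{\eta_t^z}\nabla_zf(x_{t+1},z_t)\Big),$$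 stopping at the first $l$ for which $$F(x_{t+1},z_{t+1})\le\max\{F(x_{t-r+1},z_{t-r+1}),\dots,F(x_t,z_t)\}-\tfrac{\sigma_1}2\eta_t^x\|x_{t+1}-x_t\|^2-\tfrac{\sigma_2}2\eta_t^z\|z_{t+1}-z_t\|^2$$ (only indices $\ge0$ in the maximum). Then set $$\hat\eta_{t+1}^x=\min\Big\{\overline\eta,\max\Big\{\underline\eta,\tfrac{\langle x_{t+1}-x_t,\nabla_xf(x_{t+1},z_{t+1})-\nabla_xf(x_t,z_t)\rangle}{\|x_{t+1}-x_t\|^2}\Big\}\Big\},$$ $$\hat\eta_{t+1}^z=\min\Big\{\overline\eta,\max\Big\{\underline\eta,\tfrac{\langle z_{t+1}-z_t,\nabla_zf(x_{t+1},z_{t+1})-\nabla_zf(x_{t+1},z_t)\rangle}{\|z_{t+1}-z_t\|^2}\Big\}\Big\}.$$ If the generated sequence is bounded and $F$ is continuous on a compact set containing the sequence, then $\lim_{t\to\infty}\|x_{t+1}-x_t\|=0$ and $\lim_{t\to\infty}\|z_{t+1}-z_t\|=0$.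
   Context: $\|\cdot\|$ is the Euclidean norm. $\operatorname{Prox}_{\phi/\eta}(y):=\operatorname{argmin}_u\{\tfrac1\eta\phi(u)+\tfrac12\|u-y\|^2\}$. The directional derivative is $\phi'(u;d):=\lim_{\tau\to+0}\frac{\phi(u+\tau d)-\phi(u)}{\tau}$ (possibly $+\infty$). *)

theory Defs
  imports "HOL-Analysis.Analysis"
begin

text \<open>Extended-real-valued functions R^n -> R \<union> {+\<infinity>} are modelled as maps into ereal
  that never take the value -\<infinity>.\<close>

definition proper_fun :: "('a \<Rightarrow> ereal) \<Rightarrow> bool" where
  "proper_fun \<phi> \<longleftrightarrow> (\<forall>u. \<phi> u \<noteq> -\<infinity>) \<and> (\<exists>u. \<phi> u \<noteq> \<infinity>)"

definition lsc_fun :: "('a::topological_space \<Rightarrow> ereal) \<Rightarrow> bool" where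
  "lsc_fun \<phi> \<longleftrightarrow> (\<forall>u c. c < \<phi> u \<longrightarrow> (\<forall>\<^sub>F v in at u. c < \<phi> v))"

definition dir_differentiable :: "('a::real_normed_vector \<Rightarrow> ereal) \<Rightarrow> bool" where
  "dir_differentiable \<phi> \<longleftrightarrow>
     (\<forall>u d. \<bar>\<phi> u\<bar> \<noteq> \<infinity> \<longrightarrow>
        (\<exists>L. L \<noteq> -\<infinity> \<and>
           ((\<lambda>\<tau>. (\<phi> (u + \<tau> *\<^sub>R d) - \<phi> u) / ereal \<tau>) \<longlongrightarrow> L) (at_right 0)))"

definition prox_bounded :: "('a::real_normed_vector \<Rightarrow> ereal) \<Rightarrow> bool" where
  "prox_bounded \<phi> \<longleftrightarrow> (\<exists>\<eta>>0. \<exists>B. \<forall>u. ereal B \<le> \<phi> u + ereal (\<eta> / 2 * (norm u)\<^sup>2))"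

definition prox :: "('a::real_normed_vector \<Rightarrow> ereal) \<Rightarrow> real \<Rightarrow> 'a \<Rightarrow> 'a set" where
  "prox \<phi> \<eta> y = {u. \<forall>v. \<phi> u / ereal \<eta> + ereal ((norm (u - y))\<^sup>2 / 2)
                         \<le> \<phi> v / ereal \<eta> + ereal ((norm (v - y))\<^sup>2 / 2)}"

end

theory Submission
  imports Defs
begin

lemma sq_to_zero:
  fixes d u :: "nat \<Rightarrow> real"
  assumes "\<And>t. d t \<ge> 0" "c > 0" "eventually (\<lambda>t. c * (d t)^2 \<le> u t) sequentially" "u \<longlonglongrightarrow> 0"
  shows "d \<longlonglongrightarrow> 0"
proof -
  have lim: "(\<lambda>t. u t / c) \<longlonglongrightarrow> 0" using tendsto_divide_zero[OF assms(4)] .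
  have ev: "eventually (\<lambda>t. (d t)^2 \<le> u t / c) sequentially"
    using assms(3) by eventually_elim (subst pos_le_divide_eq[OF assms(2)], metis mult.commute)
  have lo: "eventually (\<lambda>t. 0 \<le> (d t)^2) sequentially" by simp
  have "(\<lambda>t. (d t)^2) \<longlonglongrightarrow> 0"
    by (rule tendsto_sandwich[OF lo ev tendsto_const lim])
  then have "(\<lambda>t. sqrt ((d t)^2)) \<longlonglongrightarrow> sqrt 0" by (rule tendsto_real_sqrt)
  then show ?thesis using assms(1) by simp
qed

lemma uc_transfer:
  fixes p :: "nat \<Rightarrow> 'c::real_normed_vector" and \<phi> :: "nat \<Rightarrow> real"
  assumes uc: "\<And>e. e > 0 \<Longrightarrow> \<exists>d>0. \<forall>s t. norm (p s - p t) < d \<longrightarrow> \<bar>\<phi> s - \<phi> t\<bar> < e"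
    and d: "(\<lambda>t. norm (p (u t) - p (v t))) \<longlonglongrightarrow> 0"
    and v: "(\<lambda>t. \<phi> (v t)) \<longlonglongrightarrow> L"
  shows "(\<lambda>t. \<phi> (u t)) \<longlonglongrightarrow> L"
proof -
  have "(\<lambda>t. \<phi> (u t) - \<phi> (v t)) \<longlonglongrightarrow> 0"
    unfolding tendsto_iff
  proof (intro allI impI)
    fix e :: real assume "e > 0"
    then obtain \<delta> where \<delta>: "\<delta> > 0" "\<forall>s t. norm (p s - p t) < \<delta> \<longrightarrow> \<bar>\<phi> s - \<phi> t\<bar> < e"
      using uc by blast
    have "eventually (\<lambda>t. dist (norm (p (u t) - p (v t))) 0 < \<delta>) sequentially"
      using d \<delta>(1) unfolding tendsto_iff by blast
    then show "eventually (\<lambda>t. dist (\<phi> (u t) - \<phi> (v t)) 0 < e) sequentially"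
      by eventually_elim (use \<delta>(2) in auto)
  qed
  from tendsto_add[OF this v] show ?thesis by simp
qed

lemma grippo:
  fixes p :: "nat \<Rightarrow> 'c::real_normed_vector" and \<phi> :: "nat \<Rightarrow> real"
  assumes r: "r \<ge> 1" and c: "c > 0"
    and acc: "\<And>t. t \<ge> N \<Longrightarrow> \<phi> (Suc t) \<le> Max (\<phi> ` {j. t < j + r \<and> j \<le> t}) - c * (norm (p (Suc t) - p t))\<^sup>2"
    and lb: "\<And>t. B \<le> \<phi> t"
    and uc: "\<And>e. e > 0 \<Longrightarrow> \<exists>d>0. \<forall>s t. norm (p s - p t) < d \<longrightarrow> \<bar>\<phi> s - \<phi> t\<bar> < e"
  shows "(\<lambda>t. norm (p (Suc t) - p t)) \<longlonglongrightarrow> 0"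
proof -
  define W where "W t = {j. t < j + r \<and> j \<le> t}" for t
  have finW: "finite (W t)" for t
    by (rule finite_subset[of _ "{..t}"]) (auto simp: W_def)
  have tW: "t \<in> W t" for t using r by (auto simp: W_def)
  define m where "m t = Max (\<phi> ` W t)" for t
  have m_ge: "\<phi> j \<le> m t" if "j \<in> W t" for j t
    using that finW unfolding m_def by auto
  have m_att: "\<exists>j\<in>W t. \<phi> j = m t" for t
  proof -
    have "m t \<in> \<phi> ` W t" unfolding m_def using finW tW by (intro Max_in) auto
    then show ?thesis by auto
  qed
  have acc': "\<phi> (Suc t) \<le> m t - c * (norm (p (Suc t) - p t))\<^sup>2" if "t \<ge> N" for t
    using acc[OF that] unfolding m_def W_def .
  have mono: "m (Suc t) \<le> m t" if "t \<ge> N" for t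
  proof -
    have "\<phi> j \<le> m t" if "j \<in> W (Suc t)" for j
    proof (cases "j = Suc t")
      case True
      have "0 \<le> c * (norm (p (Suc t) - p t))\<^sup>2" using c by simp
      then show ?thesis using acc'[OF \<open>t \<ge> N\<close>] unfolding True by linarith
    next
      case False
      then have "j \<in> W t" using that by (auto simp: W_def)
      then show ?thesis by (rule m_ge)
    qed
    then show ?thesis unfolding m_def[of "Suc t"] using finW tW
      by (subst Max_le_iff) auto
  qed
  have m_lb: "B \<le> m t" for t using m_ge[OF tW] lb order_trans by blast
  have "decseq (\<lambda>n. m (n + N))"
    by (rule decseq_SucI) (simp add: mono)
  then obtain L where "(\<lambda>n. m (n + N)) \<longlonglongrightarrow> L"
    using decseq_convergent[of "\<lambda>n. m (n + N)" B] m_lb by blast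
  then have mL: "m \<longlonglongrightarrow> L" by (rule LIMSEQ_offset)
  have mlim: "(\<lambda>t. m (q t)) \<longlonglongrightarrow> L" if "\<And>t. t \<le> q t" for q
  proof -
    have "filterlim q sequentially sequentially"
      by (rule filterlim_at_top_mono[OF filterlim_ident]) (use that in auto)
    then show ?thesis by (rule filterlim_compose[OF mL])
  qed
  have "\<exists>ell. \<forall>t. ell t \<in> W t \<and> \<phi> (ell t) = m t"
    by (rule choice) (use m_att in blast)
  then obtain ell where ell: "\<And>t. ell t \<in> W t \<and> \<phi> (ell t) = m t"
    by blast
  define K where "K = N + 2 * r"
  define a where "a t = ell (t + K)" for t
  have a_lo: "t + K < a t + r" and a_hi: "a t \<le> t + K" for t
    using ell[of "t + K"] unfolding a_def W_def by auto
  have claim: "(\<lambda>t. \<phi> (a t - j)) \<longlonglongrightarrow> L" if "j \<le> r" for j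
    using that
  proof (induction j)
    case 0
    have "(\<lambda>t. m (t + K)) \<longlonglongrightarrow> L" by (rule mlim) simp
    then show ?case using ell by (simp add: a_def)
  next
    case (Suc j)
    define s where "s t = a t - Suc j" for t
    have sS: "Suc (s t) = a t - j" for t
      using a_lo[of t] Suc.prems unfolding s_def K_def by auto
    have sN: "N \<le> s t" "t \<le> s t" for t
      using a_lo[of t] Suc.prems unfolding s_def K_def by auto
    have IH: "(\<lambda>t. \<phi> (a t - j)) \<longlonglongrightarrow> L" using Suc by simp
    have "(\<lambda>t. m (s t) - \<phi> (a t - j)) \<longlonglongrightarrow> L - L"
      by (rule tendsto_diff[OF mlim[of s, OF sN(2)] IH])
    then have u0: "(\<lambda>t. m (s t) - \<phi> (a t - j)) \<longlonglongrightarrow> 0" by simp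
    have "(\<lambda>t. norm (p (Suc (s t)) - p (s t))) \<longlonglongrightarrow> 0"
    proof (rule sq_to_zero[OF _ c _ u0])
      show "\<forall>\<^sub>F t in sequentially. c * (norm (p (Suc (s t)) - p (s t)))\<^sup>2 \<le> m (s t) - \<phi> (a t - j)"
      proof (intro always_eventually allI)
        fix t
        have "\<phi> (Suc (s t)) \<le> m (s t) - c * (norm (p (Suc (s t)) - p (s t)))\<^sup>2"
          by (rule acc'[OF sN(1)])
        then show "c * (norm (p (Suc (s t)) - p (s t)))\<^sup>2 \<le> m (s t) - \<phi> (a t - j)"
          unfolding sS by linarith
      qed
    qed auto
    then have "(\<lambda>t. norm (p (s t) - p (Suc (s t)))) \<longlonglongrightarrow> 0"
      by (simp add: norm_minus_commute)
    moreover have "(\<lambda>t. \<phi> (Suc (s t))) \<longlonglongrightarrow> L" using IH by (simp only: sS)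
    ultimately have "(\<lambda>t. \<phi> (s t)) \<longlonglongrightarrow> L"
      using uc_transfer[of p \<phi> s "\<lambda>t. Suc (s t)" L, OF uc] by blast
    then show ?case by (simp add: s_def)
  qed
  have phiL: "\<phi> \<longlonglongrightarrow> L"
    unfolding tendsto_iff
  proof (intro allI impI)
    fix e :: real assume "e > 0"
    have "\<forall>j\<in>{..<r}. eventually (\<lambda>t. dist (\<phi> (a t - j)) L < e) sequentially"
      using claim \<open>e > 0\<close> unfolding tendsto_iff by auto
    then have "eventually (\<lambda>t. \<forall>j\<in>{..<r}. dist (\<phi> (a t - j)) L < e) sequentially"
      by (rule eventually_ball_finite[rotated]) auto
    then obtain T where T: "\<And>t j. t \<ge> T \<Longrightarrow> j < r \<Longrightarrow> dist (\<phi> (a t - j)) L < e"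
      unfolding eventually_sequentially by auto
    show "eventually (\<lambda>s. dist (\<phi> s) L < e) sequentially"
      unfolding eventually_sequentially
    proof (intro exI allI impI)
      fix s assume s: "s \<ge> T + K"
      define t where "t = s + r - 1 - K"
      have tK: "t + K = s + r - 1" using s r unfolding t_def by arith
      have "t \<ge> T" using s r unfolding t_def by arith
      have h1: "s \<le> a t" "a t - s < r" using a_lo[of t] a_hi[of t] tK r by arith+
      have "a t - (a t - s) = s" using h1 by arith
      then show "dist (\<phi> s) L < e" using T[OF \<open>t \<ge> T\<close> h1(2)] by simp
    qed
  qed
  have "(\<lambda>t. m t - \<phi> (Suc t)) \<longlonglongrightarrow> L - L"
    by (rule tendsto_diff[OF mL LIMSEQ_Suc[OF phiL]])
  then have u0: "(\<lambda>t. m t - \<phi> (Suc t)) \<longlonglongrightarrow> 0" by simp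
  have ev: "\<forall>\<^sub>F t in sequentially. c * (norm (p (Suc t) - p t))\<^sup>2 \<le> m t - \<phi> (Suc t)"
  proof (rule eventually_sequentiallyI[of N])
    fix t assume "N \<le> t"
    from acc'[OF this] show "c * (norm (p (Suc t) - p t))\<^sup>2 \<le> m t - \<phi> (Suc t)" by linarith
  qed
  have "(\<lambda>t. norm (p (Suc t) - p t)) \<longlonglongrightarrow> 0"
    by (rule sq_to_zero[where d="\<lambda>t. norm (p (Suc t) - p t)" and c=c and u="\<lambda>t. m t - \<phi> (Suc t)", OF _ c ev u0]) simp
  then show ?thesis .
qed


lemma prox_finite:
  fixes \<phi> :: "'a::real_normed_vector \<Rightarrow> ereal"
  assumes "proper_fun \<phi>" "\<eta> > 0" "u \<in> prox \<phi> \<eta> y"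
  shows "\<bar>\<phi> u\<bar> \<noteq> \<infinity>"
proof -
  obtain v where v: "\<phi> v \<noteq> \<infinity>" and nm: "\<And>w. \<phi> w \<noteq> -\<infinity>"
    using assms(1) unfolding proper_fun_def by blast
  then obtain w where w: "\<phi> v = ereal w" by (cases "\<phi> v") auto
  have le: "\<phi> u / ereal \<eta> + ereal ((norm (u - y))\<^sup>2 / 2) \<le> \<phi> v / ereal \<eta> + ereal ((norm (v - y))\<^sup>2 / 2)"
    using assms(3) unfolding prox_def by blast
  show ?thesis
  proof
    assume "\<bar>\<phi> u\<bar> = \<infinity>"
    then have "\<phi> u = \<infinity>" using nm[of u] by (cases "\<phi> u") auto
    then show False using le w assms(2) by simp
  qed
qed

lemma ereal_minus_nonneg_le: "a \<ge> 0 \<Longrightarrow> (x::ereal) - ereal a \<le> x"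
  by (cases x) auto

theorem lemma3:
  fixes f :: "'a::euclidean_space \<times> 'b::euclidean_space \<Rightarrow> real"
    and gx :: "'a \<times> 'b \<Rightarrow> 'a" and gz :: "'a \<times> 'b \<Rightarrow> 'b"
    and g :: "'a \<Rightarrow> ereal" and h :: "'b \<Rightarrow> ereal"
    and M :: real and r :: nat
    and \<rho>1 \<rho>2 \<sigma>1 \<sigma>2 \<eta>lo \<eta>up :: real
    and x :: "nat \<Rightarrow> 'a" and z :: "nat \<Rightarrow> 'b"
    and \<eta>hx \<eta>hz :: "nat \<Rightarrow> real" and l :: "nat \<Rightarrow> nat"
  defines "F \<equiv> (\<lambda>p. ereal (f p) + g (fst p) + h (snd p))"
  assumes grad: "\<And>p. (f has_derivative (\<lambda>d. gx p \<bullet> fst d + gz p \<bullet> snd d)) (at p)"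
    and M_pos: "M > 0"
    and lip: "\<And>p q. norm (gx p - gx q, gz p - gz q) \<le> M * norm (p - q)"
    and g_prop: "proper_fun g" "lsc_fun g" "dir_differentiable g"
    and h_prop: "proper_fun h" "lsc_fun h" "dir_differentiable h"
    and F_bdd: "\<exists>B. \<forall>p. ereal B \<le> F p"
    and g_pb: "prox_bounded g" and h_pb: "prox_bounded h"
    and r: "r \<ge> 1"
    and \<rho>: "\<rho>1 > 1" "\<rho>2 > 1"
    and \<sigma>: "0 < \<sigma>1" "\<sigma>1 < 1" "0 < \<sigma>2" "\<sigma>2 < 1"
    and \<eta>bnds: "0 < \<eta>lo" "\<eta>lo \<le> \<eta>up"
    and init: "\<eta>hx 0 = 1" "\<eta>hz 0 = 1"
    \<comment> \<open>accepted step at iteration t with l t backtracking steps\<close>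
    and step_x: "\<And>t. x (Suc t) \<in> prox g (\<rho>1 ^ l t * \<eta>hx t)
                   (x t - (1 / (\<rho>1 ^ l t * \<eta>hx t)) *\<^sub>R gx (x t, z t))"
    and step_z: "\<And>t. z (Suc t) \<in> prox h (\<rho>2 ^ l t * \<eta>hz t)
                   (z t - (1 / (\<rho>2 ^ l t * \<eta>hz t)) *\<^sub>R gz (x (Suc t), z t))"
    and accept: "\<And>t. F (x (Suc t), z (Suc t))
                   \<le> Max {F (x j, z j) | j. t < j + r \<and> j \<le> t}
                     - ereal (\<sigma>1 / 2 * (\<rho>1 ^ l t * \<eta>hx t) * (norm (x (Suc t) - x t))\<^sup>2)
                     - ereal (\<sigma>2 / 2 * (\<rho>2 ^ l t * \<eta>hz t) * (norm (z (Suc t) - z t))\<^sup>2)"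
    \<comment> \<open>l t is the first trial index at which the test is passed: every earlier trial
        produced (by the prox steps) a point failing the test\<close>
    and first: "\<And>t k. k < l t \<Longrightarrow>
                  \<exists>x' z'. x' \<in> prox g (\<rho>1 ^ k * \<eta>hx t)
                             (x t - (1 / (\<rho>1 ^ k * \<eta>hx t)) *\<^sub>R gx (x t, z t))
                        \<and> z' \<in> prox h (\<rho>2 ^ k * \<eta>hz t)
                             (z t - (1 / (\<rho>2 ^ k * \<eta>hz t)) *\<^sub>R gz (x', z t))
                        \<and> \<not> (F (x', z')
                              \<le> Max {F (x j, z j) | j. t < j + r \<and> j \<le> t}
                                - ereal (\<sigma>1 / 2 * (\<rho>1 ^ k * \<eta>hx t) * (norm (x' - x t))\<^sup>2)
                                - ereal (\<sigma>2 / 2 * (\<rho>2 ^ k * \<eta>hz t) * (norm (z' - z t))\<^sup>2))"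
    and upd_x: "\<And>t. \<eta>hx (Suc t) = min \<eta>up (max \<eta>lo
                   (((x (Suc t) - x t) \<bullet> (gx (x (Suc t), z (Suc t)) - gx (x t, z t)))
                    / (norm (x (Suc t) - x t))\<^sup>2))"
    and upd_z: "\<And>t. \<eta>hz (Suc t) = min \<eta>up (max \<eta>lo
                   (((z (Suc t) - z t) \<bullet> (gz (x (Suc t), z (Suc t)) - gz (x (Suc t), z t)))
                    / (norm (z (Suc t) - z t))\<^sup>2))"
    and bdd: "bounded (range (\<lambda>t. (x t, z t)))"
    and F_cont: "\<exists>K. compact K \<and> range (\<lambda>t. (x t, z t)) \<subseteq> K \<and> continuous_on K F"
  shows "(\<lambda>t. norm (x (Suc t) - x t)) \<longlonglongrightarrow> 0 \<and> (\<lambda>t. norm (z (Suc t) - z t)) \<longlonglongrightarrow> 0"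
proof -
  define p where "p t = (x t, z t)" for t
  define \<eta>0 where "\<eta>0 = min 1 \<eta>lo"
  have \<eta>0_pos: "\<eta>0 > 0" using \<eta>bnds unfolding \<eta>0_def by simp
  have hx_lb: "\<eta>0 \<le> \<eta>hx t" for t
  proof (cases t)
    case 0 then show ?thesis using init unfolding \<eta>0_def by simp
  next
    case (Suc s) then show ?thesis using upd_x[of s] \<eta>bnds unfolding \<eta>0_def by (simp add: min_le_iff_disj le_max_iff_disj)
  qed
  have hz_lb: "\<eta>0 \<le> \<eta>hz t" for t
  proof (cases t)
    case 0 then show ?thesis using init unfolding \<eta>0_def by simp
  next
    case (Suc s) then show ?thesis using upd_z[of s] \<eta>bnds unfolding \<eta>0_def by (simp add: min_le_iff_disj le_max_iff_disj)
  qed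
  have Ex_lb: "\<eta>0 \<le> \<rho>1 ^ l t * \<eta>hx t" for t
  proof -
    have "1 \<le> \<rho>1 ^ l t" using \<rho> by simp
    moreover have "0 \<le> \<eta>hx t" using hx_lb[of t] \<eta>0_pos by simp
    ultimately have "\<eta>hx t \<le> \<rho>1 ^ l t * \<eta>hx t"
      by (metis mult_right_mono mult_1)
    then show ?thesis using hx_lb[of t] by simp
  qed
  have Ez_lb: "\<eta>0 \<le> \<rho>2 ^ l t * \<eta>hz t" for t
  proof -
    have "1 \<le> \<rho>2 ^ l t" using \<rho> by simp
    moreover have "0 \<le> \<eta>hz t" using hz_lb[of t] \<eta>0_pos by simp
    ultimately have "\<eta>hz t \<le> \<rho>2 ^ l t * \<eta>hz t"
      by (metis mult_right_mono mult_1)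
    then show ?thesis using hz_lb[of t] by simp
  qed
  have gfin: "\<bar>g (x (Suc t))\<bar> \<noteq> \<infinity>" for t
    by (rule prox_finite[OF g_prop(1) _ step_x]) (use Ex_lb[of t] \<eta>0_pos in linarith)
  have hfin: "\<bar>h (z (Suc t))\<bar> \<noteq> \<infinity>" for t
    by (rule prox_finite[OF h_prop(1) _ step_z]) (use Ez_lb[of t] \<eta>0_pos in linarith)
  have g_nm: "g u \<noteq> -\<infinity>" for u using g_prop(1) unfolding proper_fun_def by blast
  have h_nm: "h u \<noteq> -\<infinity>" for u using h_prop(1) unfolding proper_fun_def by blast
  have F_nm: "F q \<noteq> -\<infinity>" for q
    using g_nm[of "fst q"] h_nm[of "snd q"] unfolding F_def
    by (cases "g (fst q)"; cases "h (snd q)") auto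
  define \<Phi> where "\<Phi> t = real_of_ereal (F (p t))" for t
  have Ffin: "F (p t) = ereal (\<Phi> t)" if t1: "t \<ge> 1" for t
  proof -
    obtain s where s: "t = Suc s" using t1 by (cases t) auto
    have "\<bar>F (p t)\<bar> \<noteq> \<infinity>"
      using gfin[of s] hfin[of s] unfolding F_def p_def s
      by (cases "g (x (Suc s))"; cases "h (z (Suc s))") auto
    then show ?thesis unfolding \<Phi>_def by (simp add: ereal_real')
  qed
  define W where "W t = {j. t < j + r \<and> j \<le> t}" for t
  have finW: "finite (W t)" for t
    by (rule finite_subset[of _ "{..t}"]) (auto simp: W_def)
  have tW: "t \<in> W t" for t using r by (auto simp: W_def)
  have S_eq: "{F (x j, z j) | j. t < j + r \<and> j \<le> t} = (\<lambda>j. F (p j)) ` W t" for t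
    unfolding W_def p_def by auto
  have acc0: "F (p (Suc t)) \<le> Max ((\<lambda>j. F (p j)) ` W t)
      - ereal (\<sigma>1 / 2 * (\<rho>1 ^ l t * \<eta>hx t) * (norm (x (Suc t) - x t))\<^sup>2)
      - ereal (\<sigma>2 / 2 * (\<rho>2 ^ l t * \<eta>hz t) * (norm (z (Suc t) - z t))\<^sup>2)" for t
    using accept[of t] unfolding S_eq p_def .
  have A_nn: "0 \<le> \<sigma>1 / 2 * (\<rho>1 ^ l t * \<eta>hx t) * (norm (x (Suc t) - x t))\<^sup>2" for t
    using \<sigma> Ex_lb[of t] \<eta>0_pos by simp
  have B_nn: "0 \<le> \<sigma>2 / 2 * (\<rho>2 ^ l t * \<eta>hz t) * (norm (z (Suc t) - z t))\<^sup>2" for t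
    using \<sigma> Ez_lb[of t] \<eta>0_pos by simp
  have acc1: "F (p (Suc t)) \<le> Max ((\<lambda>j. F (p j)) ` W t)" for t
    using acc0[of t] ereal_minus_nonneg_le[OF A_nn[of t]] ereal_minus_nonneg_le[OF B_nn[of t]]
    by (meson order_trans ereal_minus_mono order_refl)
  define C where "C = Max (\<Phi> ` {1..r})"
  have FC: "t \<ge> 1 \<Longrightarrow> F (p t) \<le> ereal C" for t
  proof (induction t rule: less_induct)
    case (less t)
    show ?case
    proof (cases "t \<le> r")
      case True
      then have "\<Phi> t \<le> C" unfolding C_def using less.prems by (intro Max_ge) auto
      then show ?thesis using Ffin[OF less.prems] by simp
    next
      case False
      then obtain s where s: "t = Suc s" "s \<ge> r" using r by (cases t) auto
      have "Max ((\<lambda>j. F (p j)) ` W s) \<le> ereal C"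
      proof (subst Max_le_iff)
        show "\<forall>a\<in>(\<lambda>j. F (p j)) ` W s. a \<le> ereal C"
        proof
          fix a assume "a \<in> (\<lambda>j. F (p j)) ` W s"
          then obtain j where j: "j \<in> W s" "a = F (p j)" by blast
          then have "j < t" "1 \<le> j" using s r unfolding W_def by auto
          then show "a \<le> ereal C" using less.IH j(2) by blast
        qed
      qed (use finW tW in auto)
      then show ?thesis using acc1[of s] s by simp
    qed
  qed
  obtain K where K: "compact K" "range (\<lambda>t. (x t, z t)) \<subseteq> K" "continuous_on K F"
    using F_cont by blast
  have pK: "p t \<in> K" for t using K(2) unfolding p_def by auto
  define G where "G q = real_of_ereal (min (F q) (ereal C))" for q
  have minfin: "\<bar>min (F q) (ereal C)\<bar> \<noteq> \<infinity>" for q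
    using F_nm[of q] by (cases "F q") (auto simp: min_def)
  have "continuous_on K (\<lambda>q. min (F q) (ereal C))"
    by (intro continuous_on_min K(3) continuous_on_const)
  then have "continuous_on K (real_of_ereal \<circ> (\<lambda>q. min (F q) (ereal C)))"
    using continuous_on_iff_real[of K "\<lambda>q. min (F q) (ereal C)", OF minfin] by blast
  then have Gc: "continuous_on K G" unfolding G_def comp_def .
  have Guc: "uniformly_continuous_on K G" by (rule compact_uniformly_continuous[OF Gc K(1)])
  define \<phi> where "\<phi> t = G (p t)" for t
  have phi_eq: "ereal (\<phi> t) = F (p t)" if "t \<ge> 1" for t
    using FC[OF that] minfin[of "p t"] unfolding \<phi>_def G_def
    by (simp add: min_absorb1 ereal_real')
  obtain B0 where B0: "\<And>q. ereal B0 \<le> F q" using F_bdd by blast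
  have phi_lb: "min B0 C \<le> \<phi> t" for t
  proof -
    have "ereal (min B0 C) \<le> min (F (p t)) (ereal C)" using B0[of "p t"] by (auto simp: min_le_iff_disj)
    also have "\<dots> = ereal (\<phi> t)" unfolding \<phi>_def G_def using minfin[of "p t"] by (simp add: ereal_real')
    finally show ?thesis by (simp add: min_le_iff_disj)
  qed
  have uc: "\<exists>d>0. \<forall>s t. norm (p s - p t) < d \<longrightarrow> \<bar>\<phi> s - \<phi> t\<bar> < e" if "e > 0" for e
  proof -
    obtain d where d: "d > 0" "\<forall>q\<in>K. \<forall>q'\<in>K. dist q' q < d \<longrightarrow> dist (G q') (G q) < e"
      using Guc \<open>e > 0\<close> unfolding uniformly_continuous_on_def by blast
    show ?thesis
    proof (intro exI conjI allI impI)
      fix s t assume "norm (p s - p t) < d"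
      then show "\<bar>\<phi> s - \<phi> t\<bar> < e" using d(2) pK[of s] pK[of t]
        unfolding \<phi>_def by (auto simp: dist_norm)
    qed (use d in auto)
  qed
  define c where "c = min \<sigma>1 \<sigma>2 / 2 * \<eta>0"
  have c_pos: "c > 0" unfolding c_def using \<sigma> \<eta>0_pos by simp
  have mono_e: "mono ereal" by (auto simp: mono_def)
  have acc: "\<phi> (Suc t) \<le> Max (\<phi> ` {j. t < j + r \<and> j \<le> t}) - c * (norm (p (Suc t) - p t))\<^sup>2"
    if "t \<ge> r" for t
  proof -
    have Wge: "j \<in> W t \<Longrightarrow> 1 \<le> j" for j using that unfolding W_def by auto
    have "(\<lambda>j. F (p j)) ` W t = ereal ` (\<phi> ` W t)"
      unfolding image_image using phi_eq Wge by (intro image_cong refl) (simp add: eq_commute)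
    moreover have "ereal (Max (\<phi> ` W t)) = Max (ereal ` (\<phi> ` W t))"
      by (rule mono_Max_commute[OF mono_e]) (use finW tW in auto)
    ultimately have MaxE: "Max ((\<lambda>j. F (p j)) ` W t) = ereal (Max (\<phi> ` W t))"
      by simp
    define A where "A = \<sigma>1 / 2 * (\<rho>1 ^ l t * \<eta>hx t) * (norm (x (Suc t) - x t))\<^sup>2"
    define Bz where "Bz = \<sigma>2 / 2 * (\<rho>2 ^ l t * \<eta>hz t) * (norm (z (Suc t) - z t))\<^sup>2"
    have "ereal (\<phi> (Suc t)) \<le> ereal (Max (\<phi> ` W t)) - ereal A - ereal Bz"
      using acc0[of t] phi_eq[of "Suc t"] MaxE unfolding A_def Bz_def by simp
    then have le1: "\<phi> (Suc t) \<le> Max (\<phi> ` W t) - A - Bz" by simp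
    have cA: "c * (norm (x (Suc t) - x t))\<^sup>2 \<le> A"
    proof -
      have "min \<sigma>1 \<sigma>2 / 2 * \<eta>0 \<le> \<sigma>1 / 2 * (\<rho>1 ^ l t * \<eta>hx t)"
        by (rule mult_mono) (use \<sigma> Ex_lb[of t] \<eta>0_pos in auto)
      then show ?thesis unfolding A_def c_def by (rule mult_right_mono) simp
    qed
    have cB: "c * (norm (z (Suc t) - z t))\<^sup>2 \<le> Bz"
    proof -
      have "min \<sigma>1 \<sigma>2 / 2 * \<eta>0 \<le> \<sigma>2 / 2 * (\<rho>2 ^ l t * \<eta>hz t)"
        by (rule mult_mono) (use \<sigma> Ez_lb[of t] \<eta>0_pos in auto)
      then show ?thesis unfolding Bz_def c_def by (rule mult_right_mono) simp
    qed
    have nsq: "(norm (p (Suc t) - p t))\<^sup>2 = (norm (x (Suc t) - x t))\<^sup>2 + (norm (z (Suc t) - z t))\<^sup>2"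
      unfolding p_def by (simp add: norm_Pair)
    show ?thesis using le1 cA cB unfolding nsq W_def by (simp add: distrib_left)
  qed
  have lim: "(\<lambda>t. norm (p (Suc t) - p t)) \<longlonglongrightarrow> 0"
    by (rule grippo[OF r c_pos acc phi_lb uc])
  have lx: "(\<lambda>t. x (Suc t) - x t) \<longlonglongrightarrow> 0"
  proof (rule Lim_null_comparison[OF _ lim])
    show "\<forall>\<^sub>F t in sequentially. norm (x (Suc t) - x t) \<le> norm (p (Suc t) - p t)"
      unfolding p_def by (intro always_eventually allI) (simp add: norm_fst_le)
  qed
  have lz: "(\<lambda>t. z (Suc t) - z t) \<longlonglongrightarrow> 0"
  proof (rule Lim_null_comparison[OF _ lim])
    show "\<forall>\<^sub>F t in sequentially. norm (z (Suc t) - z t) \<le> norm (p (Suc t) - p t)"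
      unfolding p_def by (intro always_eventually allI) (simp add: norm_snd_le)
  qed
  show ?thesis using tendsto_norm_zero[OF lx] tendsto_norm_zero[OF lz] by simp
qed

end
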